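(* For each $i$ (indices mod $8g-4$): (i) the angle at $V_{i+1}$ between the geodesics $V_{i+1}P_{i+2}$ and $V_{i+1}Q_{i+1}$ is greater than $\pi/4$; (ii) the angle at $V_i$ between the geodesics $V_iQ_{i-1}$ and $V_iP_i$ is greater than $\pi/4$.
   Context: Fix $g\ge 2$. Let $\mathcal F$ be the regular hyperbolic $(8g-4)$-gon in the Poincaré unit disk, centered at $0$, with all interior angles equal to $\pi/2$. Label its sides $1,\dots,8g-4$ counterclockwise (indices mod $8g-4$) and its vertices $V_i$ so that side $i$ joins $V_i$ to $V_{i+1}$. The complete geodesic containing side $i$ has endpoints $P_i$ (beyond $V_i$) and $Q_{i+1}$ (beyond $V_{i+1}$) on the unit circle; counterclockwise order on the circle is $P_1,Q_1,P_2,Q_2,\dots,P_{8g-4},Q_{8g-4}$. For a vertex $V$ and a point $X$ on the unit circle, $VX$ denotes the geodesic ray from $V$ to $X$. *)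

theory Defs
  imports "HOL-Analysis.Analysis"
begin

text \<open>Poincare unit disk model. The disk automorphism (hyperbolic isometry)
  sending the point V of the disk to 0. Its derivative at V is the positive real
  1/(1 - |V|^2), so it preserves tangent directions at V; it maps geodesics through
  V to diameters through 0.\<close>
definition mob :: "complex \<Rightarrow> complex \<Rightarrow> complex" where
  "mob V z = (z - V) / (1 - cnj V * z)"

text \<open>Unit tangent vector at V of the geodesic ray (or segment) from V towards X,
  where X lies in the closed disk and X differs from V.\<close>
definition hdir :: "complex \<Rightarrow> complex \<Rightarrow> complex" where
  "hdir V X = mob V X / complex_of_real (cmod (mob V X))"

definition hangle :: "complex \<Rightarrow> complex \<Rightarrow> complex \<Rightarrow> real" where
  "hangle V X Y = arccos (Re (hdir V X * cnj (hdir V Y)))"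

end

theory Submission
  imports Defs
begin


lemma den_nz: assumes "cmod W < 1" "cmod Z \<le> 1" shows "1 - cnj W * Z \<noteq> 0"
proof
  assume "1 - cnj W * Z = 0"
  hence "cnj W * Z = 1" by simp
  hence "cmod (cnj W * Z) = 1" by simp
  moreover have "cmod (cnj W * Z) \<le> cmod W" 
    using assms by (simp add: norm_mult mult_left_le)
  ultimately show False using assms by simp
qed

lemma sq_ident: "cmod (1 - cnj W * X)^2 - cmod (X - W)^2 = (1 - cmod W^2) * (1 - cmod X^2)"
proof -
  have "complex_of_real (cmod (1 - cnj W * X)^2 - cmod (X - W)^2) = complex_of_real ((1 - cmod W^2) * (1 - cmod X^2))"
    by (simp only: of_real_diff of_real_mult of_real_1 complex_norm_square) (simp add: algebra_simps)
  thus ?thesis using of_real_eq_iff by blast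
qed




lemma mob_norm: "cmod (mob W X) = cmod (X - W) / cmod (1 - cnj W * X)"
  by (simp add: mob_def norm_divide)

lemma mob_norm_lt1: assumes "cmod W < 1" "cmod X < 1" shows "cmod (mob W X) < 1"
proof -
  have d: "1 - cnj W * X \<noteq> 0" using den_nz assms by auto
  have a: "cmod W ^2 < 1" "cmod X ^2 < 1" using assms by (simp_all add: abs_square_less_1)
  have "0 < (1 - cmod W^2) * (1 - cmod X^2)" using a by simp
  hence "cmod (X - W)^2 < cmod (1 - cnj W * X)^2"
    using sq_ident[of W X] by linarith
  hence "cmod (X - W) < cmod (1 - cnj W * X)"
    using power_less_imp_less_base by fastforce
  thus ?thesis using d by (simp add: mob_norm)
qed

lemma mob_norm_eq1: assumes "cmod W < 1" "cmod X = 1" shows "cmod (mob W X) = 1"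
proof -
  have d: "1 - cnj W * X \<noteq> 0" using den_nz assms by auto
  have "cmod (X - W)^2 = cmod (1 - cnj W * X)^2"
    using sq_ident[of W X] assms by simp
  hence "cmod (X - W) = cmod (1 - cnj W * X)"
    using power2_eq_iff_nonneg by fastforce
  thus ?thesis using d by (simp add: mob_norm)
qed

lemma mob_zero_iff: assumes "cmod W < 1" "cmod X \<le> 1" shows "mob W X = 0 \<longleftrightarrow> X = W"
  using den_nz[OF assms] by (auto simp: mob_def)

lemma mob_0: "mob B 0 = - B" by (simp add: mob_def)
lemma mob_self: "mob W W = 0" by (simp add: mob_def)

lemma hdir_unit: assumes "cmod (mob W X) = 1" shows "hdir W X = mob W X"
  using assms by (simp add: hdir_def)

lemma hdir_eq: "hdir W X = mob W X / of_real (cmod (mob W X))" by (simp add: hdir_def)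

lemma unit_ne: assumes "cmod W < 1" shows "1 - W * cnj W \<noteq> 0"
proof
  assume "1 - W * cnj W = 0"
  hence "complex_of_real (cmod W) ^2 = 1" using complex_norm_square[of W] by simp
  hence "cmod W ^2 = 1" by (metis of_real_eq_1_iff of_real_power)
  thus False using assms(1) by (simp add: abs_square_eq_1)
qed

lemma mob_comp:
  assumes "cmod W < 1" "cmod X < 1" "cmod Z \<le> 1"
  shows "mob (mob W X) (mob W Z) = ((1 - W * cnj X) / (1 - cnj W * X)) * mob X Z"
proof -
  define a where "a = 1 - cnj W * Z"
  define d where "d = 1 - cnj W * X"
  define d' where "d' = 1 - W * cnj X"
  define w where "w = 1 - W * cnj W"
  have d1: "d \<noteq> 0" unfolding d_def using den_nz assms by auto
  have d2: "a \<noteq> 0" unfolding a_def using den_nz assms by auto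
  have d1': "d' \<noteq> 0" using d1 unfolding d_def d'_def
    by (metis complex_cnj_cnj complex_cnj_diff complex_cnj_mult complex_cnj_one complex_cnj_zero)
  have w: "w \<noteq> 0" unfolding w_def using unit_ne assms by auto
  have B: "mob W X = (X - W) / d" by (simp add: mob_def d_def)
  have cB: "cnj (mob W X) = (cnj X - cnj W) / d'" by (simp add: mob_def d'_def)
  have Z: "mob W Z = (Z - W) / a" by (simp add: mob_def a_def)
  have n: "mob W Z - mob W X = (Z - X) * w / (a * d)"
  proof -
    have "mob W Z - mob W X = ((Z - W) * d - (X - W) * a) / (a * d)"
      unfolding B Z using d1 d2 by (simp add: diff_frac_eq)
    also have "(Z - W) * d - (X - W) * a = (Z - X) * w"
      unfolding a_def d_def w_def by (simp add: algebra_simps)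
    finally show ?thesis .
  qed
  have e: "1 - cnj (mob W X) * mob W Z = w * (1 - cnj X * Z) / (d' * a)"
  proof -
    have "1 - cnj (mob W X) * mob W Z = (d' * a - (cnj X - cnj W) * (Z - W)) / (d' * a)"
      unfolding cB Z using d1' d2 by (simp add: field_simps)
    also have "d' * a - (cnj X - cnj W) * (Z - W) = w * (1 - cnj X * Z)"
      unfolding a_def d'_def w_def by (simp add: algebra_simps)
    finally show ?thesis .
  qed
  have "mob (mob W X) (mob W Z) = ((Z - X) * w / (a * d)) / (w * (1 - cnj X * Z) / (d' * a))"
    unfolding mob_def[of "mob W X"] n e ..
  also have "\<dots> = (d' / d) * ((Z - X) / (1 - cnj X * Z))"
  proof (cases "1 - cnj X * Z = 0")
    case True thus ?thesis by simp
  next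
    case False thus ?thesis using d1 d1' d2 w by (simp add: field_simps)
  qed
  finally show ?thesis by (simp add: mob_def d_def d'_def)
qed

lemma lam_norm: assumes "cmod W < 1" "cmod X < 1" shows "cmod ((1 - W * cnj X) / (1 - cnj W * X)) = 1"
proof -
  have d1: "1 - cnj W * X \<noteq> 0" using den_nz assms by auto
  have "1 - W * cnj X = cnj (1 - cnj W * X)" by simp
  hence "cmod (1 - W * cnj X) = cmod (1 - cnj W * X)" by (metis complex_mod_cnj)
  thus ?thesis using d1 by (simp add: norm_divide)
qed

lemma perp: assumes "Re (u * cnj v) = 0" "v \<noteq> 0"
  shows "u = \<i> * of_real (Im (u * cnj v) / cmod v ^ 2) * v"
proof -
  have "u * cnj v = \<i> * of_real (Im (u * cnj v))" using assms(1) by (simp add: complex_eq_iff)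
  moreover have "v * cnj v = complex_of_real (cmod v ^ 2)" by (rule complex_norm_square[symmetric])
  ultimately have "u * complex_of_real (cmod v ^ 2) = \<i> * of_real (Im (u * cnj v)) * v"
    by (metis mult.assoc mult.commute)
  thus ?thesis using assms(2) by (simp add: field_simps)
qed




lemma arccos_gt: assumes "-1 \<le> x" "x < 3/5" shows "arccos x > pi/4"
proof -
  have s: "3/5 < 1 / sqrt 2"
  proof -
    have "sqrt 2 < 5/3" by (rule real_less_lsqrt) (auto simp: power2_eq_square)
    thus ?thesis by (simp add: field_simps)
  qed
  have "1 / sqrt 2 \<le> 1" by (simp add: field_simps)
  hence "arccos (1 / sqrt 2) < arccos x" using assms s by (intro arccos_less_arccos) auto
  thus ?thesis by (simp add: arccos_one_over_sqrt_2)
qed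

lemma core:
  fixes W X Y Vp F N :: complex
  assumes hW: "cmod W < 1" and hX: "cmod X < 1" and hY: "cmod Y < 1" and hVp: "cmod Vp < 1"
    and hF1: "cmod F = 1" and hN1: "cmod N = 1"
    and XW: "X \<noteq> W" and YX: "Y \<noteq> X" and VW: "Vp \<noteq> W"
    and hF: "hdir X F = - hdir X Y" and hN: "hdir W N = - hdir W Vp"
    and rW: "Re (mob W Vp * cnj (mob W X)) = 0" and rX: "Re (mob X W * cnj (mob X Y)) = 0"
    and ht: "cmod (mob W X) > 1/2"
  shows "hangle W F N > pi/4"
proof -
  define B where "B = mob W X"
  define t where "t = cmod B"
  have B0: "B \<noteq> 0" unfolding B_def using mob_zero_iff[of W X] hW hX XW by auto
  have t1: "t < 1" unfolding t_def B_def using mob_norm_lt1 hW hX by auto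
  have t2: "t > 1/2" unfolding t_def B_def using ht .
  define A where "A = mob W Vp"
  have A0: "A \<noteq> 0" unfolding A_def using mob_zero_iff[of W Vp] hW hVp VW by auto
  define p where "p = mob W F"
  have p1: "cmod p = 1" unfolding p_def using mob_norm_eq1 hW hF1 by auto
  have hp: "hdir W F = p" unfolding p_def using hdir_unit p1 p_def by auto
  define n where "n = mob W N"
  have n1: "cmod n = 1" unfolding n_def using mob_norm_eq1 hW hN1 by auto
  have hn: "hdir W N = n" unfolding n_def using hdir_unit n1 n_def by auto
  have nA: "n = - A / of_real (cmod A)" using hN hn by (simp add: hdir_eq A_def)
  define mF where "mF = mob X F"
  define mY where "mY = mob X Y"
  have mY0: "mY \<noteq> 0" unfolding mY_def using mob_zero_iff[of X Y] hX hY YX by auto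
  have mF1: "cmod mF = 1" unfolding mF_def using mob_norm_eq1 hX hF1 by auto
  have mFY: "mF = - mY / of_real (cmod mY)"
    using hF hdir_unit[OF mF1[unfolded mF_def]] by (simp add: hdir_eq mF_def mY_def)
  define lam where "lam = (1 - W * cnj X) / (1 - cnj W * X)"
  have lam1: "cmod lam = 1" unfolding lam_def using lam_norm hW hX by auto
  have lamc: "lam * cnj lam = 1"
    using complex_norm_square[of lam] lam1 by simp
  define e where "e = mob B p"
  have e_eq: "e = lam * mF" unfolding e_def B_def p_def lam_def mF_def
    using mob_comp[of W X F] hW hX hF1 by auto
  have mB: "- B = lam * mob X W"
    using mob_comp[of W X W] hW hX by (simp add: mob_self mob_0 B_def lam_def)
  have eB: "Re (e * cnj B) = 0"
  proof -
    have cB: "cnj B = - (cnj lam * cnj (mob X W))" using arg_cong[OF mB, of cnj] by (metis complex_cnj_minus complex_cnj_mult minus_minus)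
    have "e * cnj B = - (lam * cnj lam) * (mF * cnj (mob X W))"
      unfolding e_eq cB by (simp add: algebra_simps)
    also have "\<dots> = (mY * cnj (mob X W)) / of_real (cmod mY)"
      using lamc mFY by simp
    finally have "Re (e * cnj B) = Re (mY * cnj (mob X W)) / cmod mY"
      by (simp add: Re_divide_of_real)
    moreover have "Re (mY * cnj (mob X W)) = Re (mob X W * cnj mY)"
      by simp
    moreover have "Re (mob X W * cnj mY) = 0" using rX by (simp only: mY_def)
    ultimately have "Re (e * cnj B) = 0 / cmod mY" by (simp only:)
    thus ?thesis by (simp only: div_0)
  qed
  have e1: "cmod e = 1" unfolding e_def using mob_norm_eq1 p1 t1 t_def by auto
  define k where "k = Im (e * cnj B) / t^2"
  have ek: "e = \<i> * of_real k * B" using perp[OF eB B0] by (simp add: k_def t_def)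
  have AB: "Re (A * cnj B) = 0" using rW by (simp add: A_def B_def)
  define m where "m = Im (A * cnj B) / t^2"
  have Am: "A = \<i> * of_real m * B" using perp[OF AB B0] by (simp add: m_def t_def)
  have m0: "m \<noteq> 0" using A0 Am by auto
  have kt: "\<bar>k\<bar> * t = 1" using e1 ek by (simp add: norm_mult t_def)
  have cA: "cmod A = \<bar>m\<bar> * t" using Am by (simp add: norm_mult t_def)
  have BB: "cnj B * B = of_real (t^2)" using complex_norm_square[of B] t_def by (simp add: mult.commute)
  have den: "1 + cnj B * e \<noteq> 0" using den_nz[of "-B" e] t1 e1 t_def by simp
  have pe: "p = (e + B) / (1 + cnj B * e)"
  proof -
    have d: "1 - cnj B * p \<noteq> 0" using den_nz[of B p] t1 p1 t_def by simp
    have "e * (1 - cnj B * p) = p - B" using d by (simp add: e_def mob_def)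
    hence "p * (1 + cnj B * e) = e + B" by (simp add: algebra_simps)
    thus ?thesis using den by (simp add: field_simps)
  qed
  define sg where "sg = m / \<bar>m\<bar>"
  define s where "s = k * t"
  have s2: "s^2 = 1"
  proof -
    have "s^2 = (\<bar>k\<bar>*t)^2" by (simp add: s_def power_mult_distrib)
    thus ?thesis using kt by simp
  qed
  have sg2: "\<bar>sg * s\<bar> = 1"
  proof -
    have "\<bar>sg\<bar> = 1" using m0 by (simp add: sg_def abs_divide)
    moreover have "\<bar>s\<bar> = 1" using kt t2 by (simp add: s_def abs_mult)
    ultimately show ?thesis by (simp add: abs_mult)
  qed
  have d2: "1 + \<i> * of_real (k * t^2) \<noteq> 0"
  proof
    assume "1 + \<i> * of_real (k * t^2) = 0"
    hence "Re (1 + \<i> * of_real (k * t^2)) = 0" by simp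
    thus False by simp
  qed
  have pB: "p = B * (1 + \<i> * of_real k) / (1 + \<i> * of_real (k * t^2))"
  proof -
    have "cnj B * e = \<i> * of_real (k * t^2)" unfolding ek
      using BB by (simp add: algebra_simps)
    thus ?thesis unfolding pe by (simp add: ek algebra_simps)
  qed
  have cn: "cnj n = \<i> * of_real (sg / t) * cnj B"
    using nA Am cA m0 t2 by (simp add: sg_def)
  define D where "D = 1 + \<i> * of_real (k * t^2)"
  have q: "p * cnj n = (of_real (sg*t) * (\<i> - of_real k)) / D"
  proof -
    have "p * cnj n = ((cnj B * B) * ((1 + \<i> * of_real k) * (\<i> * of_real (sg / t)))) / D"
      unfolding pB cn D_def by (simp add: ac_simps)
    also have "\<dots> = (of_real (t^2) * ((1 + \<i> * of_real k) * (\<i> * of_real (sg / t)))) / D"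
      by (simp only: BB)
    also have "of_real (t^2) * ((1 + \<i> * of_real k) * (\<i> * of_real (sg / t))) = of_real (sg*t) * (\<i> - of_real k)"
      using t2 by (simp add: complex_eq_iff power2_eq_square field_simps)
    finally show ?thesis .
  qed
  have kt2: "(k * t^2)^2 = t^2"
  proof -
    have "(k * t^2)^2 = (\<bar>k\<bar> * t)^2 * t^2" by (simp add: power2_eq_square)
    thus ?thesis using kt by simp
  qed
  have Req: "Re (p * cnj n) = sg * s * (t^2 - 1) / (1 + t^2)"
  proof -
    have "Re (p * cnj n) = ((- (sg * t * k)) + sg * t * (k * t^2)) / (1 + (k * t^2)^2)"
      unfolding q D_def by (simp add: Re_divide power2_eq_square)
    also have "\<dots> = ((- (sg * t * k)) + sg * t * (k * t^2)) / (1 + t^2)" by (simp only: kt2)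
    finally show ?thesis by (simp add: s_def field_simps power2_eq_square)
  qed
  have "\<bar>Re (p * cnj n)\<bar> = (1 - t^2) / (1 + t^2)"
  proof -
    have "t^2 < 1" using t1 t2 by (simp add: power_less_one_iff abs_square_less_1)
    hence "\<bar>t^2 - 1\<bar> = 1 - t^2" by simp
    thus ?thesis unfolding Req using sg2 by (simp add: abs_mult abs_divide)
  qed
  also have "\<dots> < 3/5"
  proof -
    have "(1/2)^2 < t^2" using t2 by (intro power_strict_mono) auto
    hence "1/4 < t^2" by (simp add: power2_eq_square)
    have "0 < 1 + t^2" by (simp add: add_pos_nonneg)
    thus ?thesis using \<open>1/4 < t^2\<close> by (simp add: field_simps)
  qed
  finally have ab: "\<bar>Re (p * cnj n)\<bar> < 3/5" .
  have "Re (p * cnj n) < 3/5" "- 1 \<le> Re (p * cnj n)" using ab by linarith+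
  thus ?thesis unfolding hangle_def hp hn using arccos_gt by auto
qed




lemma poly_bound:
  fixes x y :: real
  assumes "0 < x" "x < 1" "1/2 < y" "y < 1"
    and eq: "((1+x)*(y-1))^2 = (1 - y^2) * (1-x)^2"
  shows "(1 - 2*x*y + x^2) < 4 * x * (2 - 2*y)"
proof -
  have c1: "0 < 1 - y" using assms by simp
  have e2: "(1+x)^2 * (1-y) = (1+y) * (1-x)^2"
  proof -
    have "(1+x)^2 * (1-y) * (1-y) = (1+y) * (1-x)^2 * (1-y)"
      using eq by (simp add: power2_eq_square algebra_simps)
    thus ?thesis using c1 by simp
  qed
  have den: "1 - 2*x*y + x^2 = (1+x)^2 * (1-y)"
    using e2 by (simp add: power2_eq_square algebra_simps)
  have q: "x^2 - 4*x + 1 < 0"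
  proof -
    have p1: "0 < (1-x)^2" "0 < (1+x)^2" using assms by auto
    have "(1+y) * (1-x)^2 > 3/2 * (1-x)^2" using mult_strict_right_mono[of "3/2" "1+y" "(1-x)^2"] p1 assms by simp
    moreover have "(1+x)^2 * (1-y) < (1+x)^2 * (1/2)" using mult_strict_left_mono[of "1-y" "1/2" "(1+x)^2"] p1 assms by simp
    ultimately have "3 * (1-x)^2 < (1+x)^2" using e2 by linarith
    thus ?thesis by (simp add: power2_eq_square algebra_simps)
  qed
  have "(1+x)^2 < 8 * x" using q assms by (simp add: power2_eq_square algebra_simps)
  hence "(1+x)^2 * (1-y) < 8 * x * (1-y)" using c1 by simp
  thus ?thesis using den by (simp add: algebra_simps)
qed




lemma mob_rot: assumes "cmod c = 1" shows "mob (c*a) (c*b) = c * mob a b"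
proof -
  have cc: "cnj c * c = 1" using complex_norm_square[of c] assms by (simp add: mult.commute)
  have "cnj (c*a) * (c*b) = (cnj c * c) * (cnj a * b)" by (simp add: ac_simps)
  hence "cnj (c*a) * (c*b) = cnj a * b" using cc by simp
  moreover have "c*b - c*a = c * (b - a)" by (simp add: algebra_simps)
  ultimately show ?thesis by (simp add: mob_def)
qed

lemma tb:
  fixes r \<alpha> \<theta> :: real
  assumes r: "0 < r" "r < 1" and c: "1/2 < cos \<theta>" and sn: "0 < sin \<theta>"
    and ra: "Re (mob (of_real r * cis \<alpha>) (of_real r * cis (\<alpha> - \<theta>)) * cnj (mob (of_real r * cis \<alpha>) (of_real r * cis (\<alpha> + \<theta>)))) = 0"
  shows "cmod (mob (of_real r * cis \<alpha>) (of_real r * cis (\<alpha> + \<theta>))) > 1/2"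
proof -
  define z where "z = cis \<theta>"
  define B where "B = mob (of_real r) (of_real r * z)"
  have h1: "mob (of_real r * cis \<alpha>) (of_real r * cis (\<alpha> + \<theta>)) = cis \<alpha> * B"
  proof -
    have e1: "of_real r * cis (\<alpha> + \<theta>) = cis \<alpha> * (of_real r * z)" by (simp add: z_def cis_mult[symmetric] ac_simps)
    have e2: "of_real r * cis \<alpha> = cis \<alpha> * of_real r" by (simp add: ac_simps)
    show ?thesis unfolding B_def e1 e2 by (rule mob_rot) simp
  qed
  have h2: "mob (of_real r * cis \<alpha>) (of_real r * cis (\<alpha> - \<theta>)) = cis \<alpha> * cnj B"
  proof -
    have e1: "of_real r * cis (\<alpha> - \<theta>) = cis \<alpha> * (of_real r * cnj z)"
      by (simp add: z_def cis_cnj cis_mult ac_simps)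
    have e2: "of_real r * cis \<alpha> = cis \<alpha> * of_real r" by (simp add: ac_simps)
    have e3: "mob (of_real r) (of_real r * cnj z) = cnj B" by (simp add: B_def mob_def)
    show ?thesis unfolding e1 e2 e3[symmetric] by (rule mob_rot) simp
  qed
  have ca: "cis \<alpha> * cnj (cis \<alpha>) = 1" by (simp add: cis_cnj cis_mult)
  have "Re (cnj B * cnj B) = 0"
  proof -
    have "cis \<alpha> * cnj B * cnj (cis \<alpha> * B) = (cis \<alpha> * cnj (cis \<alpha>)) * (cnj B * cnj B)"
      by (simp only: complex_cnj_mult ac_simps)
    hence "cis \<alpha> * cnj B * cnj (cis \<alpha> * B) = cnj B * cnj B" unfolding ca by simp
    thus ?thesis using ra unfolding h1 h2 by (simp only:)
  qed
  hence BB: "Re B ^2 = Im B ^2" by (simp add: power2_eq_square)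
  define s where "s = r^2"
  define E where "E = 1 - of_real s * z"
  have E0: "E \<noteq> 0" unfolding E_def s_def using den_nz[of "of_real r" "of_real r * z"] r
    by (simp add: z_def norm_mult power2_eq_square mult.assoc)
  define w where "w = (z - 1) * cnj E"
  have "B = of_real r * (z - 1) / E" by (simp add: B_def mob_def E_def s_def power2_eq_square algebra_simps)
  hence b1: "B * E = of_real r * (z - 1)" using E0 by simp
  have Bw: "B = of_real (r / cmod E ^ 2) * w"
  proof -
    have ee: "of_real (cmod E ^2) = E * cnj E" by (rule complex_norm_square)
    have "B * of_real (cmod E ^2) = (B * E) * cnj E" unfolding ee by (simp add: ac_simps)
    hence b2: "B * of_real (cmod E ^2) = of_real r * w" unfolding b1 w_def by (simp add: ac_simps)
    have "cmod E ^ 2 \<noteq> 0" using E0 by simp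
    hence "B = of_real r * w / of_real (cmod E ^2)" using b2 by (simp add: field_simps del: of_real_power)
    thus ?thesis by (simp add: field_simps del: of_real_power)
  qed
  have Rw: "Re w = (1 + s) * (cos \<theta> - 1)"
    unfolding w_def E_def z_def by (simp add: algebra_simps) (metis distrib_left mult.right_neutral sin_cos_squared_add3)
  have Iw: "Im w = sin \<theta> * (1 - s)"
    unfolding w_def E_def z_def by (simp add: algebra_simps)
  define k where "k = r / cmod E ^ 2"
  have k0: "k \<noteq> 0" using E0 r by (simp add: k_def)
  have "Re B = k * Re w" "Im B = k * Im w" using Bw by (simp_all add: k_def)
  hence "(k * Re w)^2 = (k * Im w)^2" using BB by simp
  hence "Re w ^2 = Im w ^2" using k0 by (simp add: power_mult_distrib)
  hence eq: "((1+s) * (cos \<theta> - 1))^2 = (1 - cos \<theta> ^2) * (1 - s)^2"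
    unfolding Rw Iw by (simp add: power_mult_distrib sin_squared_eq)
  have s01: "0 < s" "s < 1" using r by (simp_all add: s_def power_less_one_iff abs_square_less_1)
  have c1: "cos \<theta> < 1"
  proof -
    have "cos \<theta> ^ 2 < 1" using sn sin_squared_eq[of \<theta>] by (smt (verit) zero_less_power)
    thus ?thesis by (simp add: abs_square_less_1 abs_less_iff)
  qed
  have pb: "1 - 2 * s * cos \<theta> + s^2 < 4 * s * (2 - 2*cos \<theta>)"
    using poly_bound[OF s01 c c1 eq] .
  have sc: "sin \<theta> * sin \<theta> = 1 - cos \<theta> * cos \<theta>" using sin_cos_squared_add3[of \<theta>] by linarith
  have nE: "cmod E ^ 2 = 1 - 2 * s * cos \<theta> + s^2"
    unfolding cmod_power2 E_def z_def
    by (simp add: power2_eq_square algebra_simps sc)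
  have nz: "cmod (z - 1) ^ 2 = 2 - 2 * cos \<theta>"
    unfolding cmod_power2 z_def
    by (simp add: power2_eq_square algebra_simps sc)
  have "cmod B * cmod E = r * cmod (z - 1)" using arg_cong[OF b1, of cmod] r by (simp add: norm_mult)
  hence "cmod B ^ 2 * cmod E ^ 2 = s * (2 - 2 * cos \<theta>)"
    unfolding s_def nz[symmetric] by (metis power_mult_distrib)
  hence "cmod B ^ 2 * cmod E ^ 2 > (1/2)^2 * cmod E ^ 2" using pb nE by (simp add: power2_eq_square)
  hence "cmod B ^ 2 > (1/2)^2" using E0 by simp
  hence "cmod B > 1/2" by (smt (verit) power_mono norm_ge_zero)
  thus ?thesis unfolding h1 by (simp add: norm_mult)
qed




lemma re_swap: "Re (a * cnj b) = Re (b * cnj a)" by simp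

lemma mob_sym_norm: "cmod (mob W X) = cmod (mob X W)"
proof -
  have "cmod (1 - cnj X * W) = cmod (cnj (1 - cnj X * W))" by (rule complex_mod_cnj[symmetric])
  also have "cnj (1 - cnj X * W) = 1 - cnj W * X" by (simp add: mult.commute)
  finally show ?thesis by (simp add: mob_norm norm_minus_commute)
qed

lemma ra_conv:
  assumes "cmod W < 1" "cmod A < 1" "cmod C < 1" "A \<noteq> W" "C \<noteq> W" "hangle W A C = pi/2"
  shows "Re (mob W A * cnj (mob W C)) = 0"
proof -
  have a0: "mob W A \<noteq> 0" using mob_zero_iff[of W A] assms by auto
  have c0: "mob W C \<noteq> 0" using mob_zero_iff[of W C] assms by auto
  define x where "x = Re (hdir W A * cnj (hdir W C))"
  have hx: "x = Re (mob W A * cnj (mob W C)) / (cmod (mob W A) * cmod (mob W C))"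
    unfolding x_def hdir_eq by (simp add: Re_divide_of_real)
  have "cmod (hdir W A * cnj (hdir W C)) = 1" using a0 c0 by (simp add: hdir_eq norm_mult norm_divide)
  hence "\<bar>x\<bar> \<le> 1" unfolding x_def by (metis abs_Re_le_cmod)
  hence "cos (arccos x) = x" by (simp add: cos_arccos_abs)
  moreover have "arccos x = pi/2" using assms(6) by (simp add: hangle_def x_def)
  ultimately have "x = 0" by simp
  thus ?thesis using hx a0 c0 by simp
qed




theorem lemma8p1:
  fixes g :: nat and r \<phi> :: real and V P Q :: "int \<Rightarrow> complex"
  assumes g: "g \<ge> 2"
    and r: "0 < r" "r < 1"
    and V: "\<forall>k. V k = complex_of_real r * cis (\<phi> + 2 * pi * real_of_int k / real (8 * g - 4))"
    and right_angles: "\<forall>k. hangle (V k) (V (k - 1)) (V (k + 1)) = pi / 2"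
    and P: "\<forall>i. cmod (P i) = 1 \<and> hdir (V i) (P i) = - hdir (V i) (V (i + 1))"
    and Q: "\<forall>i. cmod (Q (i + 1)) = 1 \<and> hdir (V (i + 1)) (Q (i + 1)) = - hdir (V (i + 1)) (V i)"
  shows "\<forall>i. hangle (V (i + 1)) (P (i + 2)) (Q (i + 1)) > pi / 4
            \<and> hangle (V i) (Q (i - 1)) (P i) > pi / 4"
proof -
  define Nn where "Nn = real (8 * g - 4)"
  have N12: "Nn \<ge> 12" using g unfolding Nn_def by simp
  define \<theta> where "\<theta> = 2 * pi / Nn"
  define a where "a k = \<phi> + 2 * pi * real_of_int k / Nn" for k :: int
  have Va: "V k = of_real r * cis (a k)" for k using V by (simp add: a_def Nn_def)
  have ap: "a (k + 1) = a k + \<theta>" for k by (simp add: a_def \<theta>_def add_divide_distrib distrib_left)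
  have am: "a (k - 1) = a k - \<theta>" for k by (simp add: a_def \<theta>_def diff_divide_distrib right_diff_distrib)
  have th0: "0 < \<theta>" using N12 by (simp add: \<theta>_def)
  have th3: "\<theta> < pi / 3"
  proof -
    have "\<theta> \<le> 2 * pi / 12" unfolding \<theta>_def using N12 by (intro divide_left_mono) auto
    thus ?thesis using th0 pi_gt_zero by linarith
  qed
  have cth: "1/2 < cos \<theta>"
  proof -
    have "cos (pi/3) < cos \<theta>" using th0 th3 by (intro cos_monotone_0_pi) auto
    thus ?thesis by (simp add: cos_60)
  qed
  have sth: "0 < sin \<theta>" using th0 th3 by (intro sin_gt_zero) auto
  have Vn: "cmod (V k) < 1" for k using r by (simp add: Va norm_mult)
  have Vne: "V (k + 1) \<noteq> V k" for k
  proof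
    assume "V (k + 1) = V k"
    hence "of_real r * (cis (a k) * cis \<theta>) = of_real r * cis (a k)" by (simp add: Va ap cis_mult)
    hence "cis \<theta> = 1" using r by simp
    hence "Im (cis \<theta>) = 0" by simp
    hence "sin \<theta> = 0" by (simp only: cis.sel)
    thus False using sth by simp
  qed
  have Vne': "V (k - 1) \<noteq> V k" for k using Vne[of "k - 1"] by (metis diff_add_cancel)
  have ra: "Re (mob (V k) (V (k - 1)) * cnj (mob (V k) (V (k + 1)))) = 0" for k
    using ra_conv[OF Vn Vn Vn Vne' Vne] right_angles by auto
  have tk: "cmod (mob (V k) (V (k + 1))) > 1/2" for k
  proof -
    have "Re (mob (of_real r * cis (a k)) (of_real r * cis (a k - \<theta>)) * cnj (mob (of_real r * cis (a k)) (of_real r * cis (a k + \<theta>)))) = 0"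
      using ra[of k] by (simp add: Va ap am)
    from tb[OF r cth sth this] show ?thesis by (simp add: Va ap)
  qed
  show ?thesis
  proof (intro allI conjI)
    fix i :: int
    have ie: "i + 1 + 1 = i + 2" "i + 2 + 1 = i + 3" "i + 1 - 1 = i" "i + 2 - 1 = i + 1"
      "i - 2 + 1 = i - 1" "i - 1 - 1 = i - 2" "i - 1 + 1 = i" by simp_all
    show "hangle (V (i + 1)) (P (i + 2)) (Q (i + 1)) > pi / 4"
    proof (rule core[OF Vn Vn Vn Vn])
      show "cmod (P (i + 2)) = 1" using P by auto
      show "cmod (Q (i + 1)) = 1" using Q by auto
      show "V (i + 2) \<noteq> V (i + 1)" using Vne[of "i+1"] unfolding ie .
      show "V (i + 3) \<noteq> V (i + 2)" using Vne[of "i+2"] unfolding ie .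
      show "V i \<noteq> V (i + 1)" using Vne[of i] by auto
      show "hdir (V (i + 2)) (P (i + 2)) = - hdir (V (i + 2)) (V (i + 3))"
        using P[rule_format, of "i+2"] unfolding ie by simp
      show "hdir (V (i + 1)) (Q (i + 1)) = - hdir (V (i + 1)) (V i)" using Q by auto
      show "Re (mob (V (i + 1)) (V i) * cnj (mob (V (i + 1)) (V (i + 2)))) = 0"
        using ra[of "i+1"] unfolding ie .
      show "Re (mob (V (i + 2)) (V (i + 1)) * cnj (mob (V (i + 2)) (V (i + 3)))) = 0"
        using ra[of "i+2"] unfolding ie .
      show "cmod (mob (V (i + 1)) (V (i + 2))) > 1/2" using tk[of "i+1"] unfolding ie .
    qed
    show "hangle (V i) (Q (i - 1)) (P i) > pi / 4"
    proof (rule core[OF Vn Vn Vn Vn])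
      show "cmod (Q (i - 1)) = 1" using Q[rule_format, of "i-2"] unfolding ie by simp
      show "cmod (P i) = 1" using P by auto
      show "V (i - 1) \<noteq> V i" using Vne' by auto
      show "V (i - 2) \<noteq> V (i - 1)" using Vne'[of "i - 1"] unfolding ie .
      show "V (i + 1) \<noteq> V i" using Vne by auto
      show "hdir (V (i - 1)) (Q (i - 1)) = - hdir (V (i - 1)) (V (i - 2))"
        using Q[rule_format, of "i-2"] unfolding ie by simp
      show "hdir (V i) (P i) = - hdir (V i) (V (i + 1))" using P by auto
      show "Re (mob (V i) (V (i + 1)) * cnj (mob (V i) (V (i - 1)))) = 0"
        using ra[of i] re_swap by metis
      show "Re (mob (V (i - 1)) (V i) * cnj (mob (V (i - 1)) (V (i - 2)))) = 0"
        using ra[of "i - 1"] re_swap unfolding ie by metis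
      show "cmod (mob (V i) (V (i - 1))) > 1/2"
        using tk[of "i - 1"] mob_sym_norm unfolding ie by metis
    qed
  qed
qed


end
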